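(* Let $X,Y$ be locally compact Hausdorff spaces, $p\colon X\to Y$ a continuous proper map, and $\mu_X$ a positive Radon measure on $X$. Let $A$ be a dense $\mathbb{C}$-subalgebra of $C_0(Y)$, and let $M\subset C_0(X)\cap\mathcal{L}^1(X,\mu_X)$ be a $p^*A$-module under pointwise multiplication such that: (1) $M$ is stable under pointwise complex conjugation; (2) for every $y\in Y$, the set of restrictions of elements of $M$ to $p^{-1}(y)$ is dense in $C(p^{-1}(y))$; (3) for every $m\in M$ there exists $n\in M$ with $|m|\le n$. Then $\mathcal{RI}(X,\mu_X)\subset\overline{M}^{\tau_M}$; that is, for every $\mu_X$-Riemann integrable $\phi$ and every $\epsilon>0$ there exist $m_1,m_2\in \overline{M}^{\tau_M}$ (equivalently in $M$) with $|\phi-m_1|\le m_2$ and $\mu_X(m_2)<\epsilon$.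
   Context: $p^*A=\{a\circ p: a\in A\}$. A function $\phi\colon X\to\mathbb{C}$ is $\mu_X$-Riemann integrable if it is bounded, compactly supported, and its set of discontinuity points is $\mu_X$-null; $\mathcal{RI}(X,\mu_X)$ is the set of such functions. For a linear subspace $M\subset\mathcal{L}^1(X,\mu_X)$ stable under complex conjugation, $\overline{M}^{\tau_M}$ denotes the set of $h\in\mathcal{L}^1(X,\mu_X)$ such that for every $\epsilon>0$ there exist $m_1,m_2\in M$ with $|h-m_1|\le m_2$ pointwise and $\mu_X(m_2)<\epsilon$. *)

theory Defs
  imports "HOL-Analysis.Analysis"
begin

definition C0 :: "('a::topological_space \<Rightarrow> complex) set" where
  "C0 = {f. continuous_on UNIV f \<and> (\<forall>e>0. compact {y. cmod (f y) \<ge> e})}"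

definition proper_map_cont :: "('a::topological_space \<Rightarrow> 'b::topological_space) \<Rightarrow> bool" where
  "proper_map_cont p \<longleftrightarrow> continuous_on UNIV p \<and> (\<forall>K. compact K \<longrightarrow> compact (p -` K))"

definition radon_measure :: "'a::topological_space measure \<Rightarrow> bool" where
  "radon_measure mu \<longleftrightarrow> sets mu = sets borel \<and>
     (\<forall>K. compact K \<longrightarrow> emeasure mu K < \<infinity>) \<and>
     (\<forall>B\<in>sets mu. emeasure mu B = (INF U\<in>{U. open U \<and> B \<subseteq> U}. emeasure mu U)) \<and>
     (\<forall>U. open U \<longrightarrow> emeasure mu U = (SUP K\<in>{K. compact K \<and> K \<subseteq> U}. emeasure mu K))"

definition L1 :: "'a measure \<Rightarrow> ('a \<Rightarrow> complex) set" where
  "L1 mu = {f. integrable (completion mu) f}"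

definition RI :: "'a::t2_space measure \<Rightarrow> ('a \<Rightarrow> complex) set" where
  "RI mu = {phi. bounded (range phi) \<and> compact (closure {x. phi x \<noteq> 0}) \<and>
              (\<exists>N\<in>null_sets (completion mu). {x. \<not> isCont phi x} \<subseteq> N)}"

definition tau_closure :: "'a measure \<Rightarrow> ('a \<Rightarrow> complex) set \<Rightarrow> ('a \<Rightarrow> complex) set" where
  "tau_closure mu M = {h \<in> L1 mu. \<forall>e>0. \<exists>m1\<in>M. \<exists>m2\<in>M.
      (\<forall>x. m2 x \<in> \<real> \<and> cmod (h x - m1 x) \<le> Re (m2 x)) \<and>
      Re (integral\<^sup>L (completion mu) m2) < e}"

end

theory Submission
  imports Defs
begin

lemma hausdorff_eucl: "Hausdorff_space (euclidean :: 'a::t2_space topology)"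
  unfolding Hausdorff_space_def disjnt_def
  using hausdorff by (simp add: open_openin[symmetric]) blast

lemma lc_nbase:
  assumes "locally_compact_space (euclidean :: 'a::t2_space topology)" "open W" "x \<in> W"
  shows "\<exists>U V. open U \<and> compact V \<and> x \<in> U \<and> U \<subseteq> V \<and> V \<subseteq> (W::'a set)"
proof -
  have "neighbourhood_base_of (compactin euclidean) (euclidean::'a topology)"
    using assms(1) hausdorff_eucl locally_compact_space_neighbourhood_base by blast
  then have "\<exists>U V. openin euclidean U \<and> compactin euclidean V \<and> x \<in> U \<and> U \<subseteq> V \<and> V \<subseteq> W"
    using assms unfolding neighbourhood_base_of by (simp add: open_openin[symmetric])
  then show ?thesis by (simp add: open_openin[symmetric])
qed


lemma urysohn_lc:
  assumes "locally_compact_space (euclidean :: 'a::t2_space topology)" "compact C" "closed T" "C \<inter> T = {}"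
  shows "\<exists>f::'a\<Rightarrow>real. continuous_on UNIV f \<and> (\<forall>x. 0 \<le> f x \<and> f x \<le> 1) \<and> (\<forall>x\<in>C. f x = 1) \<and> (\<forall>x\<in>T. f x = 0)"
proof -
  have cr: "completely_regular_space (euclidean :: 'a topology)"
    by (rule locally_compact_regular_imp_completely_regular_space[OF assms(1)], rule disjI1, rule hausdorff_eucl)
  have clT: "closedin euclidean T" using assms(3) by simp
  have dj: "disjnt C T" using assms(4) by (simp add: disjnt_def)
  have cC: "compactin euclidean C" using assms(2) by simp
  obtain f where f: "continuous_map euclidean (subtopology euclidean {0..1::real}) f" "f ` T \<subseteq> {0}" "f ` C \<subseteq> {1}"
    using Urysohn_completely_regular_compact_closed[OF zero_le_one cr cC clT dj] by blast
  have "continuous_map euclidean euclidean f" "f ` UNIV \<subseteq> {0..1}"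
    using f(1) unfolding continuous_map_in_subtopology by auto
  then have "continuous_on UNIV f" "\<forall>x. 0 \<le> f x \<and> f x \<le> 1"
    by (auto simp: image_subset_iff)
  with f(2,3) show ?thesis by blast
qed

lemma bump_lc:
  assumes "locally_compact_space (euclidean :: 'a::t2_space topology)" "compact C" "open V" "C \<subseteq> V"
  shows "\<exists>f::'a\<Rightarrow>real. continuous_on UNIV f \<and> (\<forall>x. 0 \<le> f x \<and> f x \<le> 1) \<and> (\<forall>x\<in>C. f x = 1)
     \<and> (\<forall>x. f x \<noteq> 0 \<longrightarrow> x \<in> V) \<and> (\<exists>K. compact K \<and> (\<forall>x. x \<notin> K \<longrightarrow> f x = 0))"
proof -
  have "\<forall>x\<in>C. \<exists>U K. open U \<and> compact K \<and> x \<in> U \<and> U \<subseteq> K \<and> K \<subseteq> V"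
    using lc_nbase[OF assms(1) assms(3)] assms(4) by blast
  then obtain U K where UK: "\<And>x. x\<in>C \<Longrightarrow> open (U x) \<and> compact (K x) \<and> x \<in> U x \<and> U x \<subseteq> K x \<and> K x \<subseteq> V"
    by metis
  obtain F where F: "F \<subseteq> C" "finite F" "C \<subseteq> (\<Union>x\<in>F. U x)"
  proof (rule compactE_image[OF assms(2), of C U])
    show "\<And>x. x \<in> C \<Longrightarrow> open (U x)" using UK by blast
    show "C \<subseteq> (\<Union>x\<in>C. U x)" using UK by blast
  qed blast
  define G where "G = (\<Union>x\<in>F. U x)"
  define KK where "KK = (\<Union>x\<in>F. K x)"
  have oG: "open G" unfolding G_def using F(1) UK by (intro open_UN) blast
  have cK: "compact KK" unfolding KK_def using F UK by (intro compact_UN) blast+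
  have GK: "G \<subseteq> KK" "KK \<subseteq> V"
  proof -
    show "G \<subseteq> KK" unfolding G_def KK_def
    proof (rule UN_mono)
      fix x assume "x \<in> F" then show "U x \<subseteq> K x" using F(1) UK by blast
    qed simp
    show "KK \<subseteq> V" unfolding KK_def using F(1) UK by blast
  qed
  have clG: "closed (-G)" using oG by (simp add: closed_Compl)
  have djG: "C \<inter> -G = {}" using F(3) unfolding G_def by blast
  obtain f :: "'a \<Rightarrow> real" where f: "continuous_on UNIV f" "\<forall>x. 0 \<le> f x \<and> f x \<le> 1" "\<forall>x\<in>C. f x = 1" "\<forall>x\<in>-G. f x = 0"
    using urysohn_lc[OF assms(1) assms(2) clG djG] by blast
  have "\<forall>x. f x \<noteq> 0 \<longrightarrow> x \<in> V" using f(4) GK by blast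
  moreover have "\<forall>x. x \<notin> KK \<longrightarrow> f x = 0" using f(4) GK by blast
  ultimately show ?thesis using f(1,2,3) cK by blast
qed

lemma sum_prod_telescope:
  fixes b :: "nat \<Rightarrow> real"
  shows "(\<Sum>i<n. b i * (\<Prod>j<i. 1 - b j)) = 1 - (\<Prod>j<n. 1 - b j)"
  by (induction n) (simp_all add: algebra_simps)

lemma partition_lc:
  assumes lc: "locally_compact_space (euclidean :: 'a::t2_space topology)" and P: "compact P"
    and V: "\<And>y. y\<in>P \<Longrightarrow> open (V y) \<and> y \<in> V y"
  shows "\<exists>n c (\<beta>::nat \<Rightarrow> 'a \<Rightarrow> real). (\<forall>i<n. c i \<in> P) \<and> (\<forall>i<n. continuous_on UNIV (\<beta> i))
    \<and> (\<forall>i<n. \<forall>z. 0 \<le> \<beta> i z) \<and> (\<forall>i<n. \<forall>z. \<beta> i z \<noteq> 0 \<longrightarrow> z \<in> V (c i))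
    \<and> (\<forall>i<n. \<exists>K. compact K \<and> (\<forall>z. z \<notin> K \<longrightarrow> \<beta> i z = 0))
    \<and> (\<forall>z. (\<Sum>i<n. \<beta> i z) \<le> 1) \<and> (\<forall>z\<in>P. (\<Sum>i<n. \<beta> i z) = 1)"
proof -
  have "\<forall>y\<in>P. \<exists>U K. open U \<and> compact K \<and> y \<in> U \<and> U \<subseteq> K \<and> K \<subseteq> V y"
  proof
    fix y assume "y \<in> P"
    then have "open (V y)" "y \<in> V y" using V by auto
    then show "\<exists>U K. open U \<and> compact K \<and> y \<in> U \<and> U \<subseteq> K \<and> K \<subseteq> V y" by (rule lc_nbase[OF lc])
  qed
  from bchoice[OF this] obtain U where "\<forall>y\<in>P. \<exists>K. open (U y) \<and> compact K \<and> y \<in> U y \<and> U y \<subseteq> K \<and> K \<subseteq> V y"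
    by blast
  from bchoice[OF this] obtain K where UK': "\<forall>y\<in>P. open (U y) \<and> compact (K y) \<and> y \<in> U y \<and> U y \<subseteq> K y \<and> K y \<subseteq> V y"
    by blast
  have UK: "\<And>y. y\<in>P \<Longrightarrow> open (U y) \<and> compact (K y) \<and> y \<in> U y \<and> U y \<subseteq> K y \<and> K y \<subseteq> V y"
    using UK' by (rule bspec)
  have "\<forall>y\<in>P. \<exists>f::'a\<Rightarrow>real. continuous_on UNIV f \<and> (\<forall>x. 0 \<le> f x \<and> f x \<le> 1) \<and> (\<forall>x\<in>K y. f x = 1)
     \<and> (\<forall>x. f x \<noteq> 0 \<longrightarrow> x \<in> V y) \<and> (\<exists>C. compact C \<and> (\<forall>x. x \<notin> C \<longrightarrow> f x = 0))"
  proof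
    fix y assume y: "y \<in> P"
    have "compact (K y)" "open (V y)" "K y \<subseteq> V y" using UK[OF y] V[OF y] by auto
    then show "\<exists>f::'a\<Rightarrow>real. continuous_on UNIV f \<and> (\<forall>x. 0 \<le> f x \<and> f x \<le> 1) \<and> (\<forall>x\<in>K y. f x = 1)
     \<and> (\<forall>x. f x \<noteq> 0 \<longrightarrow> x \<in> V y) \<and> (\<exists>C. compact C \<and> (\<forall>x. x \<notin> C \<longrightarrow> f x = 0))"
      by (rule bump_lc[OF lc])
  qed
  from bchoice[OF this] obtain b where b': "\<forall>y\<in>P. continuous_on UNIV (b y) \<and> (\<forall>x. 0 \<le> b y x \<and> b y x \<le> 1) \<and> (\<forall>x\<in>K y. b y x = (1::real))
     \<and> (\<forall>x. b y x \<noteq> 0 \<longrightarrow> x \<in> V y) \<and> (\<exists>C. compact C \<and> (\<forall>x. x \<notin> C \<longrightarrow> b y x = 0))"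
    by (elim exE) assumption
  have b: "\<And>y. y\<in>P \<Longrightarrow> continuous_on UNIV (b y) \<and> (\<forall>x. 0 \<le> b y x \<and> b y x \<le> 1) \<and> (\<forall>x\<in>K y. b y x = 1)
     \<and> (\<forall>x. b y x \<noteq> 0 \<longrightarrow> x \<in> V y) \<and> (\<exists>C. compact C \<and> (\<forall>x. x \<notin> C \<longrightarrow> b y x = 0))"
    using b' by (rule bspec)
  obtain F where F: "F \<subseteq> P" "finite F" "P \<subseteq> (\<Union>x\<in>F. U x)"
  proof (rule compactE_image[OF P, of P U])
    show "\<And>x. x \<in> P \<Longrightarrow> open (U x)" using UK by blast
    show "P \<subseteq> (\<Union>x\<in>P. U x)" using UK by blast
  qed blast
  obtain ys where ys: "set ys = F" using finite_list[OF F(2)] by blast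
  define n where "n = length ys"
  define c where "c i = ys ! i" for i
  define bb where "bb i = b (c i)" for i
  define \<beta> where "\<beta> i z = bb i z * (\<Prod>j<i. 1 - bb j z)" for i z
  have cP: "\<forall>i<n. c i \<in> P" using ys F(1) unfolding n_def c_def by auto
  have bb: "\<And>i. i<n \<Longrightarrow> continuous_on UNIV (bb i) \<and> (\<forall>x. 0 \<le> bb i x \<and> bb i x \<le> 1) \<and> (\<forall>x\<in>K (c i). bb i x = 1)
     \<and> (\<forall>x. bb i x \<noteq> 0 \<longrightarrow> x \<in> V (c i)) \<and> (\<exists>C. compact C \<and> (\<forall>x. x \<notin> C \<longrightarrow> bb i x = 0))"
    unfolding bb_def using b cP by blast
  have bbc: "\<And>i. i<n \<Longrightarrow> continuous_on UNIV (bb i)" using bb by simp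
  have bb01: "\<And>i x. i<n \<Longrightarrow> 0 \<le> bb i x \<and> bb i x \<le> 1" using bb by simp
  have bb1: "\<And>i x. i<n \<Longrightarrow> x \<in> K (c i) \<Longrightarrow> bb i x = 1" using bb by simp
  have bbV: "\<And>i x. i<n \<Longrightarrow> bb i x \<noteq> 0 \<Longrightarrow> x \<in> V (c i)" using bb by simp
  have bbK: "\<And>i. i<n \<Longrightarrow> \<exists>C. compact C \<and> (\<forall>x. x \<notin> C \<longrightarrow> bb i x = 0)" using bb by simp
  have prod01: "0 \<le> (\<Prod>j<i. 1 - bb j z) \<and> (\<Prod>j<i. 1 - bb j z) \<le> 1" if "i \<le> n" for i z
  proof -
    have "\<forall>j\<in>{..<i}. 0 \<le> 1 - bb j z \<and> 1 - bb j z \<le> 1" using bb01 that by force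
    then show ?thesis by (intro conjI prod_nonneg prod_le_1) auto
  qed
  have sumeq: "(\<Sum>i<n. \<beta> i z) = 1 - (\<Prod>j<n. 1 - bb j z)" for z
    unfolding \<beta>_def by (rule sum_prod_telescope)
  have H1: "\<forall>i<n. c i \<in> P" using cP by blast
  have H2: "\<forall>i<n. continuous_on UNIV (\<beta> i)"
  proof (intro allI impI)
    fix i assume "i < n"
    then have "\<And>j. j < i \<Longrightarrow> continuous_on UNIV (bb j)" using bbc by simp
    then show "continuous_on UNIV (\<beta> i)" unfolding \<beta>_def using bbc \<open>i < n\<close>
      by (intro continuous_intros) auto
  qed
  have H3: "\<forall>i<n. \<forall>z. 0 \<le> \<beta> i z"
    unfolding \<beta>_def using prod01 bb01 by (simp add: less_imp_le)
  have H4: "\<forall>i<n. \<forall>z. \<beta> i z \<noteq> 0 \<longrightarrow> z \<in> V (c i)"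
  proof (intro allI impI)
    fix i z assume "i < n" "\<beta> i z \<noteq> 0"
    then have "bb i z \<noteq> 0" unfolding \<beta>_def by auto
    then show "z \<in> V (c i)" by (rule bbV[OF \<open>i < n\<close>])
  qed
  have H5: "\<forall>i<n. \<exists>K. compact K \<and> (\<forall>z. z \<notin> K \<longrightarrow> \<beta> i z = 0)"
  proof (intro allI impI)
    fix i assume "i < n"
    then obtain C where "compact C" "\<forall>x. x \<notin> C \<longrightarrow> bb i x = 0" using bbK by blast
    then show "\<exists>K. compact K \<and> (\<forall>z. z \<notin> K \<longrightarrow> \<beta> i z = 0)" unfolding \<beta>_def by auto
  qed
  have H6: "\<forall>z. (\<Sum>i<n. \<beta> i z) \<le> 1"
    using sumeq prod01 by simp
  have H7: "\<forall>z\<in>P. (\<Sum>i<n. \<beta> i z) = 1"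
  proof
    fix z assume "z \<in> P"
    obtain y where y: "y \<in> F" "z \<in> U y" using F(3) \<open>z \<in> P\<close> by blast
    obtain i where i: "i < n" "c i = y" using ys y(1) unfolding n_def c_def by (metis in_set_conv_nth)
    have "z \<in> K (c i)" using UK[of y] F(1) y i by blast
    then have "bb i z = 1" by (rule bb1[OF i(1)])
    then have "(\<Prod>j<n. 1 - bb j z) = 0" using i(1) by (intro prod_zero) auto
    then show "(\<Sum>i<n. \<beta> i z) = 1" using sumeq[of z] by simp
  qed
  show ?thesis
    by (intro exI[of _ n] exI[of _ c] exI[of _ \<beta>] conjI H1 H2 H3 H4 H5 H6 H7)
qed

lemma rel_compact_nbhd:
  assumes lc: "locally_compact_space (euclidean :: 'a::t2_space topology)" and P: "compact (P::'a set)"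
  shows "\<exists>W C. open W \<and> compact C \<and> P \<subseteq> W \<and> W \<subseteq> C"
proof -
  have "\<forall>y\<in>P. \<exists>U K. open U \<and> compact K \<and> y \<in> U \<and> U \<subseteq> K \<and> K \<subseteq> UNIV"
  proof
    fix y assume "y \<in> P"
    show "\<exists>U K. open U \<and> compact K \<and> y \<in> U \<and> U \<subseteq> K \<and> K \<subseteq> UNIV"
      by (rule lc_nbase[OF lc open_UNIV UNIV_I])
  qed
  from bchoice[OF this] obtain U where "\<forall>y\<in>P. \<exists>K. open (U y) \<and> compact K \<and> y \<in> U y \<and> U y \<subseteq> K \<and> K \<subseteq> UNIV"
    by (elim exE) assumption
  from bchoice[OF this] obtain K where UK: "\<forall>y\<in>P. open (U y) \<and> compact (K y) \<and> y \<in> U y \<and> U y \<subseteq> K y \<and> K y \<subseteq> UNIV"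
    by (elim exE) assumption
  obtain F where F: "F \<subseteq> P" "finite F" "P \<subseteq> (\<Union>x\<in>F. U x)"
  proof (rule compactE_image[OF P, of P U])
    show "\<And>x. x \<in> P \<Longrightarrow> open (U x)" using UK by blast
    show "P \<subseteq> (\<Union>x\<in>P. U x)" using UK by blast
  qed blast
  have "open (\<Union>x\<in>F. U x)" using F(1) UK by (intro open_UN) blast
  moreover have "compact (\<Union>x\<in>F. K x)" using F UK by (intro compact_UN) blast+
  moreover have "(\<Union>x\<in>F. U x) \<subseteq> (\<Union>x\<in>F. K x)"
  proof (rule UN_mono)
    fix x assume "x \<in> F" then show "U x \<subseteq> K x" using F(1) UK by blast
  qed simp
  ultimately show ?thesis using F(3) by blast
qed

lemma proper_closed_map:
  fixes p :: "'x::t2_space \<Rightarrow> 'y::t2_space"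
  assumes lc: "locally_compact_space (euclidean :: 'y topology)" and p: "proper_map_cont p"
    and Z: "closed Z"
  shows "closed (p ` Z)"
proof -
  have pc: "continuous_on UNIV p" and pk: "\<And>K. compact K \<Longrightarrow> compact (p -` K)"
    using p unfolding proper_map_cont_def by auto
  have "open (- (p ` Z))"
  unfolding open_subopen[of "- (p ` Z)"]
  proof (intro ballI)
    fix y assume y: "y \<in> - (p ` Z)"
    obtain U C where UC: "open U" "compact C" "y \<in> U" "U \<subseteq> C"
      using lc_nbase[OF lc open_UNIV UNIV_I[of y]] by blast
    have "compact (Z \<inter> p -` C)" using Z pk[OF UC(2)] by (rule closed_Int_compact)
    then have "compact (p ` (Z \<inter> p -` C))"
      by (rule compact_continuous_image[OF continuous_on_subset[OF pc subset_UNIV]])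
    then have cl: "closed (p ` (Z \<inter> p -` C))" by (rule compact_imp_closed)
    have "open (U - p ` (Z \<inter> p -` C))" using UC(1) cl by (rule open_Diff)
    moreover have "y \<in> U - p ` (Z \<inter> p -` C)" using y UC(3) by blast
    moreover have "U - p ` (Z \<inter> p -` C) \<subseteq> - (p ` Z)" using UC(4) by blast
    ultimately show "\<exists>T. open T \<and> y \<in> T \<and> T \<subseteq> - (p ` Z)" by blast
  qed
  then show ?thesis by (simp add: closed_def)
qed

lemma proper_tube:
  fixes p :: "'x::t2_space \<Rightarrow> 'y::t2_space"
  assumes lc: "locally_compact_space (euclidean :: 'y topology)" and p: "proper_map_cont p"
    and Ob: "open Ob" and F: "p -` {y} \<subseteq> Ob"
  shows "\<exists>V. open V \<and> y \<in> V \<and> p -` V \<subseteq> Ob"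
proof -
  have "closed (p ` (-Ob))" using proper_closed_map[OF lc p] Ob by (simp add: closed_Compl)
  then have "open (- p ` (-Ob))" by (simp add: open_Compl)
  moreover have "y \<in> - p ` (-Ob)" using F by blast
  moreover have "p -` (- p ` (-Ob)) \<subseteq> Ob" by blast
  ultimately show ?thesis by blast
qed

locale setting =
  fixes p :: "'x::t2_space \<Rightarrow> 'y::t2_space"
    and mu :: "'x measure"
    and A :: "('y \<Rightarrow> complex) set"
    and M :: "('x \<Rightarrow> complex) set"
  assumes lcX: "locally_compact_space (euclidean :: 'x topology)"
    and lcY: "locally_compact_space (euclidean :: 'y topology)"
    and p: "proper_map_cont p"
    and mu: "radon_measure mu"
    and A_sub: "A \<subseteq> C0"
    and A_zero: "(\<lambda>y. 0) \<in> A"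
    and A_add: "\<And>a b. a \<in> A \<Longrightarrow> b \<in> A \<Longrightarrow> (\<lambda>y. a y + b y) \<in> A"
    and A_smult: "\<And>c a. a \<in> A \<Longrightarrow> (\<lambda>y. c * a y) \<in> A"
    and A_mult: "\<And>a b. a \<in> A \<Longrightarrow> b \<in> A \<Longrightarrow> (\<lambda>y. a y * b y) \<in> A"
    and A_dense: "\<And>f e. f \<in> C0 \<Longrightarrow> e > 0 \<Longrightarrow> \<exists>a\<in>A. \<forall>y. cmod (f y - a y) < e"
    and M_sub: "M \<subseteq> C0 \<inter> L1 mu"
    and M_zero: "(\<lambda>x. 0) \<in> M"
    and M_add: "\<And>m n. m \<in> M \<Longrightarrow> n \<in> M \<Longrightarrow> (\<lambda>x. m x + n x) \<in> M"
    and M_smult: "\<And>c m. m \<in> M \<Longrightarrow> (\<lambda>x. c * m x) \<in> M"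
    and M_module: "\<And>a m. a \<in> A \<Longrightarrow> m \<in> M \<Longrightarrow> (\<lambda>x. a (p x) * m x) \<in> M"
    and M_cnj: "\<And>m. m \<in> M \<Longrightarrow> (\<lambda>x. cnj (m x)) \<in> M"
    and M_fiber_dense: "\<And>y g e. continuous_on (p -` {y}) g \<Longrightarrow> e > 0 \<Longrightarrow>
                          \<exists>m\<in>M. \<forall>x\<in>p -` {y}. cmod (g x - m x) < e"
    and M_dom: "\<And>m. m \<in> M \<Longrightarrow> \<exists>n\<in>M. \<forall>x. n x \<in> \<real> \<and> cmod (m x) \<le> Re (n x)"
begin

abbreviation "CM \<equiv> completion mu"

lemma rad1: "sets mu = sets borel"
  using mu unfolding radon_measure_def by (elim conjE)
lemma rad2: "\<forall>K. compact K \<longrightarrow> emeasure mu K < \<infinity>"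
  using mu unfolding radon_measure_def by (elim conjE)
lemma rad3: "\<forall>B\<in>sets mu. emeasure mu B = (INF U\<in>{U. open U \<and> B \<subseteq> U}. emeasure mu U)"
  using mu unfolding radon_measure_def by (elim conjE)
lemmas rad = rad1 rad2 rad3

lemma sets_mu: "sets mu = sets borel"
  by (rule rad(1))

lemma space_mu: "space mu = UNIV"
  using sets_eq_imp_space_eq[OF sets_mu] by simp

lemma space_CM: "space CM = UNIV"
  using space_mu by simp

lemma meas_cont:
  fixes f :: "'x \<Rightarrow> 'b::topological_space"
  assumes "continuous_on UNIV f"
  shows "f \<in> borel_measurable CM"
proof -
  have "f \<in> borel_measurable borel" using assms by (rule borel_measurable_continuous_onI)
  moreover have "borel_measurable mu = (borel_measurable borel :: ('x \<Rightarrow> 'b) set)"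
    by (rule measurable_cong_sets[OF sets_mu refl])
  ultimately have "f \<in> borel_measurable mu" by simp
  then show ?thesis by (rule measurable_completion)
qed

lemma cpt_sets:
  assumes "compact K"
  shows "K \<in> sets mu" "emeasure mu K < \<infinity>" "K \<in> sets CM" "emeasure CM K = emeasure mu K"
proof -
  have "closed K" using assms by (rule compact_imp_closed)
  then have "K \<in> sets borel" by (rule borel_closed)
  then show K: "K \<in> sets mu" using sets_mu by simp
  show "emeasure mu K < \<infinity>" using rad(2) assms by simp
  show "K \<in> sets CM" using K by simp
  show "emeasure CM K = emeasure mu K" using K by simp
qed

lemma open_sets:
  assumes "open U"
  shows "U \<in> sets mu" "U \<in> sets CM" "emeasure CM U = emeasure mu U"
proof -
  have "U \<in> sets borel" using assms by (rule borel_open)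
  then show K: "U \<in> sets mu" using sets_mu by simp
  show "U \<in> sets CM" using K by simp
  show "emeasure CM U = emeasure mu U" using K by simp
qed

lemma int_cs:
  fixes f :: "'x \<Rightarrow> 'b::{banach, second_countable_topology}"
  assumes f: "continuous_on UNIV f" and K: "compact K" and z: "\<And>x. x \<notin> K \<Longrightarrow> f x = 0"
  shows "integrable CM f"
proof -
  have "compact (f ` K)" by (rule compact_continuous_image[OF continuous_on_subset[OF f subset_UNIV] K])
  then have "bounded (f ` K)" by (rule compact_imp_bounded)
  then obtain B where B: "\<forall>y\<in>f ` K. norm y \<le> B" unfolding bounded_iff by blast
  show ?thesis
  proof (rule integrableI_bounded_set[where A=K and B=B])
    show "K \<in> sets CM" using cpt_sets[OF K] by blast
    show "f \<in> borel_measurable CM" using f by (rule meas_cont)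
    show "emeasure CM K < \<infinity>" using cpt_sets[OF K] by simp
    show "AE x in CM. x \<in> K \<longrightarrow> norm (f x) \<le> B" using B by (intro AE_I2) blast
    show "AE x in CM. x \<notin> K \<longrightarrow> f x = 0" using z by (intro AE_I2) blast
  qed
qed

lemma M_C0: "m \<in> M \<Longrightarrow> m \<in> C0" using M_sub by blast
lemma M_cont: "m \<in> M \<Longrightarrow> continuous_on UNIV m" using M_C0 unfolding C0_def by blast
lemma M_int: "m \<in> M \<Longrightarrow> integrable CM m" using M_sub unfolding L1_def by blast

lemma M_sum: fixes n :: nat and f :: "nat \<Rightarrow> 'x \<Rightarrow> complex" shows "(\<And>i. i < n \<Longrightarrow> f i \<in> M) \<Longrightarrow> (\<lambda>x. \<Sum>i<n. f i x) \<in> M"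
proof (induction n)
  case 0 then show ?case using M_zero by simp
next
  case (Suc n)
  have "(\<lambda>x. (\<Sum>i<n. f i x) + f n x) \<in> M"
    using Suc by (intro M_add) auto
  then show ?case by simp
qed

lemma M_re: assumes "m \<in> M" shows "(\<lambda>x. complex_of_real (Re (m x))) \<in> M"
proof -
  have "(\<lambda>x. (1/2) * (m x + cnj (m x))) \<in> M" using assms by (intro M_smult M_add M_cnj)
  moreover have "(\<lambda>x. (1/2) * (m x + cnj (m x))) = (\<lambda>x. complex_of_real (Re (m x)))"
    by (rule ext) (simp add: complex_add_cnj)
  ultimately show ?thesis by simp
qed

lemma M_dom': assumes "m \<in> M" shows "\<exists>n\<in>M. \<forall>x. Im (n x) = 0 \<and> cmod (m x) \<le> Re (n x)"
  using M_dom[OF assms] by (simp add: complex_is_Real_iff)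

end

context setting begin

abbreviation "T \<equiv> tau_closure mu M"

lemma T_iff: "h \<in> T \<longleftrightarrow> integrable CM h \<and> (\<forall>e>0. \<exists>m1\<in>M. \<exists>m2\<in>M.
      (\<forall>x. Im (m2 x) = 0 \<and> cmod (h x - m1 x) \<le> Re (m2 x)) \<and> Re (integral\<^sup>L CM m2) < e)"
  unfolding tau_closure_def L1_def complex_is_Real_iff by simp

lemma TI:
  assumes "integrable CM h"
    and "\<And>e. e > 0 \<Longrightarrow> \<exists>m1\<in>M. \<exists>m2\<in>M. (\<forall>x. Im (m2 x) = 0 \<and> cmod (h x - m1 x) \<le> Re (m2 x)) \<and> Re (integral\<^sup>L CM m2) < e"
  shows "h \<in> T"
  using assms unfolding T_iff by blast

lemma TE:
  assumes "h \<in> T" "e > 0"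
  obtains m1 m2 where "m1 \<in> M" "m2 \<in> M" "\<And>x. Im (m2 x) = 0" "\<And>x. cmod (h x - m1 x) \<le> Re (m2 x)"
     "Re (integral\<^sup>L CM m2) < e"
proof -
  have "\<exists>m1\<in>M. \<exists>m2\<in>M. (\<forall>x. Im (m2 x) = 0 \<and> cmod (h x - m1 x) \<le> Re (m2 x)) \<and> Re (integral\<^sup>L CM m2) < e"
    using assms unfolding T_iff by blast
  then obtain m1 m2 where "m1 \<in> M" "m2 \<in> M" "\<forall>x. Im (m2 x) = 0 \<and> cmod (h x - m1 x) \<le> Re (m2 x)"
     "Re (integral\<^sup>L CM m2) < e" by blast
  then show ?thesis using that by blast
qed

lemma exI2:
  assumes "m1 \<in> M" "m2 \<in> M" "\<forall>x. Im (m2 x) = 0 \<and> cmod (h x - m1 x) \<le> Re (m2 x)" "Re (integral\<^sup>L CM m2) < e"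
  shows "\<exists>m1\<in>M. \<exists>m2\<in>M. (\<forall>x. Im (m2 x) = 0 \<and> cmod (h x - m1 x) \<le> Re (m2 x)) \<and> Re (integral\<^sup>L CM m2) < e"
  using assms by blast

lemma T_int: "h \<in> T \<Longrightarrow> integrable CM h"
  unfolding T_iff by blast

lemma M_T: assumes "m \<in> M" shows "m \<in> T"
proof (rule TI)
  show "integrable CM m" using assms by (rule M_int)
  fix e :: real assume "e > 0"
  show "\<exists>m1\<in>M. \<exists>m2\<in>M. (\<forall>x. Im (m2 x) = 0 \<and> cmod (m x - m1 x) \<le> Re (m2 x)) \<and> Re (integral\<^sup>L CM m2) < e"
    using assms M_zero \<open>e > 0\<close> by (intro bexI[of _ m] bexI[of _ "\<lambda>x. 0"]) auto
qed

lemma T_add: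
  assumes s: "s \<in> T" and t: "t \<in> T"
  shows "(\<lambda>x. s x + t x) \<in> T"
proof (rule TI)
  show "integrable CM (\<lambda>x. s x + t x)" using T_int[OF s] T_int[OF t] by simp
  fix e :: real assume e: "e > 0"
  obtain m1 m2 where m: "m1 \<in> M" "m2 \<in> M" "\<And>x. Im (m2 x) = 0" "\<And>x. cmod (s x - m1 x) \<le> Re (m2 x)"
     "Re (integral\<^sup>L CM m2) < e/2" using TE[OF s, of "e/2"] e by auto
  obtain n1 n2 where n: "n1 \<in> M" "n2 \<in> M" "\<And>x. Im (n2 x) = 0" "\<And>x. cmod (t x - n1 x) \<le> Re (n2 x)"
     "Re (integral\<^sup>L CM n2) < e/2" using TE[OF t, of "e/2"] e by auto
  have "(\<lambda>x. m1 x + n1 x) \<in> M" "(\<lambda>x. m2 x + n2 x) \<in> M" using m n by (auto intro: M_add)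
  moreover have "\<forall>x. Im (m2 x + n2 x) = 0 \<and> cmod (s x + t x - (m1 x + n1 x)) \<le> Re (m2 x + n2 x)"
  proof
    fix x
    have "cmod (s x + t x - (m1 x + n1 x)) \<le> cmod (s x - m1 x) + cmod (t x - n1 x)"
      by (metis (no_types) add_diff_add norm_triangle_ineq)
    then show "Im (m2 x + n2 x) = 0 \<and> cmod (s x + t x - (m1 x + n1 x)) \<le> Re (m2 x + n2 x)"
      using m(3,4)[of x] n(3,4)[of x] by simp
  qed
  moreover have "Re (integral\<^sup>L CM (\<lambda>x. m2 x + n2 x)) < e"
    using m(5) n(5) M_int[OF m(2)] M_int[OF n(2)] by simp
  ultimately show "\<exists>m1\<in>M. \<exists>m2\<in>M. (\<forall>x. Im (m2 x) = 0 \<and> cmod (s x + t x - m1 x) \<le> Re (m2 x)) \<and> Re (integral\<^sup>L CM m2) < e"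
    by (rule exI2)
qed

lemma T_smult:
  assumes t: "t \<in> T"
  shows "(\<lambda>x. c * t x) \<in> T"
proof (rule TI)
  show "integrable CM (\<lambda>x. c * t x)" using T_int[OF t] by simp
  fix e :: real assume e: "e > 0"
  define e' where "e' = e / (cmod c + 1)"
  have e': "e' > 0" using e unfolding e'_def by (intro divide_pos_pos) (auto intro: add_nonneg_pos)
  have ce: "cmod c * e' < e"
  proof -
    have "cmod c * e' = e * (cmod c / (cmod c + 1))" by (simp add: e'_def)
    also have "\<dots> < e * 1"
    proof (intro mult_strict_left_mono e)
      have "0 < cmod c + 1" using norm_ge_zero[of c] by linarith
      then show "cmod c / (cmod c + 1) < 1" by (simp add: divide_less_eq)
    qed
    finally show ?thesis by simp
  qed
  obtain m1 m2 where m: "m1 \<in> M" "m2 \<in> M" "\<And>x. Im (m2 x) = 0" "\<And>x. cmod (t x - m1 x) \<le> Re (m2 x)"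
     "Re (integral\<^sup>L CM m2) < e'" using TE[OF t e'] by auto
  have "(\<lambda>x. c * m1 x) \<in> M" "(\<lambda>x. complex_of_real (cmod c) * m2 x) \<in> M" using m by (auto intro: M_smult)
  moreover have "\<forall>x. Im (complex_of_real (cmod c) * m2 x) = 0 \<and> cmod (c * t x - c * m1 x) \<le> Re (complex_of_real (cmod c) * m2 x)"
  proof
    fix x
    have "cmod (c * t x - c * m1 x) = cmod c * cmod (t x - m1 x)"
      by (metis norm_mult right_diff_distrib)
    also have "\<dots> \<le> cmod c * Re (m2 x)" using m(4)[of x] by (intro mult_left_mono) auto
    finally show "Im (complex_of_real (cmod c) * m2 x) = 0 \<and> cmod (c * t x - c * m1 x) \<le> Re (complex_of_real (cmod c) * m2 x)"
      using m(3)[of x] by simp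
  qed
  moreover have "Re (integral\<^sup>L CM (\<lambda>x. complex_of_real (cmod c) * m2 x)) < e"
  proof -
    have "Re (integral\<^sup>L CM (\<lambda>x. complex_of_real (cmod c) * m2 x)) = cmod c * Re (integral\<^sup>L CM m2)"
      by simp
    also have "\<dots> \<le> cmod c * e'" using m(5) by (intro mult_left_mono) auto
    finally show ?thesis using ce by simp
  qed
  ultimately show "\<exists>m1\<in>M. \<exists>m2\<in>M. (\<forall>x. Im (m2 x) = 0 \<and> cmod (c * t x - m1 x) \<le> Re (m2 x)) \<and> Re (integral\<^sup>L CM m2) < e"
    by (rule exI2)
qed

lemma T_zero: "(\<lambda>x. 0) \<in> T" using M_T[OF M_zero] .

lemma T_sum: fixes n :: nat and f :: "nat \<Rightarrow> 'x \<Rightarrow> complex"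
  shows "(\<And>i. i < n \<Longrightarrow> f i \<in> T) \<Longrightarrow> (\<lambda>x. \<Sum>i<n. f i x) \<in> T"
proof (induction n)
  case 0 then show ?case using T_zero by simp
next
  case (Suc n)
  have "(\<lambda>x. (\<Sum>i<n. f i x) + f n x) \<in> T"
    using Suc by (intro T_add) auto
  then show ?case by simp
qed

lemma T_squeeze:
  assumes h: "integrable CM h"
    and ap: "\<And>e. e > 0 \<Longrightarrow> \<exists>t1\<in>T. \<exists>t2\<in>T. (\<forall>x. cmod (h x - t1 x) \<le> Re (t2 x)) \<and> Re (integral\<^sup>L CM t2) < e"
  shows "h \<in> T"
proof (rule TI[OF h])
  fix e :: real assume e: "e > 0"
  obtain t1 t2 where t: "t1 \<in> T" "t2 \<in> T" "\<forall>x. cmod (h x - t1 x) \<le> Re (t2 x)" "Re (integral\<^sup>L CM t2) < e/4"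
    using ap[of "e/4"] e by auto
  obtain m1 m2 where m: "m1 \<in> M" "m2 \<in> M" "\<And>x. Im (m2 x) = 0" "\<And>x. cmod (t1 x - m1 x) \<le> Re (m2 x)"
     "Re (integral\<^sup>L CM m2) < e/4" using TE[OF t(1), of "e/4"] e by auto
  obtain n1 n2 where n: "n1 \<in> M" "n2 \<in> M" "\<And>x. Im (n2 x) = 0" "\<And>x. cmod (t2 x - n1 x) \<le> Re (n2 x)"
     "Re (integral\<^sup>L CM n2) < e/4" using TE[OF t(2), of "e/4"] e by auto
  define k where "k x = complex_of_real (Re (n1 x)) + n2 x + m2 x" for x
  have kM: "k \<in> M" unfolding k_def using m n by (intro M_add M_re)
  have kpt: "\<forall>x. Im (k x) = 0 \<and> cmod (h x - m1 x) \<le> Re (k x)"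
  proof
    fix x
    have a: "cmod (h x - m1 x) \<le> cmod (h x - t1 x) + cmod (t1 x - m1 x)"
      by (metis (no_types) diff_add_cancel add_diff_eq norm_triangle_ineq)
    have b: "Re (t2 x) \<le> Re (n1 x) + cmod (t2 x - n1 x)"
      using complex_Re_le_cmod[of "t2 x - n1 x"] by simp
    show "Im (k x) = 0 \<and> cmod (h x - m1 x) \<le> Re (k x)"
    proof
      have c: "cmod (h x - t1 x) \<le> Re (t2 x)" using t(3) by blast
      show "Im (k x) = 0" unfolding k_def using m(3)[of x] n(3)[of x] by simp
      have "Re (k x) = Re (n1 x) + Re (n2 x) + Re (m2 x)" unfolding k_def by simp
      then show "cmod (h x - m1 x) \<le> Re (k x)" using a b c m(4)[of x] n(4)[of x] by linarith
    qed
  qed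
  have int_t2: "integrable CM t2" using T_int[OF t(2)] .
  have int_n1: "integrable CM n1" using M_int[OF n(1)] .
  have int_n2: "integrable CM n2" using M_int[OF n(2)] .
  have int_m2: "integrable CM m2" using M_int[OF m(2)] .
  have "integral\<^sup>L CM (\<lambda>x. Re (n1 x)) \<le> integral\<^sup>L CM (\<lambda>x. Re (t2 x) + Re (n2 x))"
  proof (rule integral_mono)
    show "integrable CM (\<lambda>x. Re (n1 x))" using int_n1 by simp
    show "integrable CM (\<lambda>x. Re (t2 x) + Re (n2 x))" using int_t2 int_n2 by simp
    fix x
    show "Re (n1 x) \<le> Re (t2 x) + Re (n2 x)"
      using complex_Re_le_cmod[of "n1 x - t2 x"] n(4)[of x] norm_minus_commute[of "t2 x" "n1 x"] by simp
  qed
  then have "Re (integral\<^sup>L CM n1) \<le> Re (integral\<^sup>L CM t2) + Re (integral\<^sup>L CM n2)"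
    using int_n1 int_t2 int_n2 by simp
  moreover have "Re (integral\<^sup>L CM k) = Re (integral\<^sup>L CM n1) + Re (integral\<^sup>L CM n2) + Re (integral\<^sup>L CM m2)"
    unfolding k_def using int_n1 int_n2 int_m2 by simp
  ultimately have "Re (integral\<^sup>L CM k) < e" using t(4) m(5) n(5) by simp
  then show "\<exists>m1\<in>M. \<exists>m2\<in>M. (\<forall>x. Im (m2 x) = 0 \<and> cmod (h x - m1 x) \<le> Re (m2 x)) \<and> Re (integral\<^sup>L CM m2) < e"
    by (rule exI2[OF m(1) kM kpt])
qed

end

lemma C0_cs:
  fixes f :: "'a::t2_space \<Rightarrow> complex"
  assumes f: "continuous_on UNIV f" and K: "compact K" and z: "\<And>x. x \<notin> K \<Longrightarrow> f x = 0"
  shows "f \<in> C0"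
  unfolding C0_def
proof (intro CollectI conjI allI impI)
  show "continuous_on UNIV f" by (rule f)
  fix e :: real assume e: "e > 0"
  have cl: "closed {y. e \<le> cmod (f y)}"
    by (intro closed_Collect_le continuous_intros f)
  have "{y. e \<le> cmod (f y)} = K \<inter> {y. e \<le> cmod (f y)}" using z e by force
  moreover have "compact (K \<inter> {y. e \<le> cmod (f y)})" using K cl by (rule compact_Int_closed)
  ultimately show "compact {y. e \<le> cmod (f y)}" by simp
qed

context setting begin

lemma pc: "continuous_on UNIV p" using p unfolding proper_map_cont_def by blast
lemma pk: "compact K \<Longrightarrow> compact (p -` K)" using p unfolding proper_map_cont_def by blast

lemma approx_A:
  fixes \<beta> :: "nat \<Rightarrow> 'y \<Rightarrow> real" and k :: nat and c :: real
  assumes bc: "\<And>i. i < k \<Longrightarrow> continuous_on UNIV (\<beta> i)"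
    and bK: "\<And>i. i < k \<Longrightarrow> \<exists>K. compact K \<and> (\<forall>z. z \<notin> K \<longrightarrow> \<beta> i z = 0)"
    and eps: "\<epsilon> > 0"
  shows "\<exists>af. \<forall>i<k. af i \<in> A \<and> (\<forall>y. cmod (complex_of_real (c * \<beta> i y) - af i y) < \<epsilon>)"
proof -
  have "\<forall>i. \<exists>a. i < k \<longrightarrow> a \<in> A \<and> (\<forall>y. cmod (complex_of_real (c * \<beta> i y) - a y) < \<epsilon>)"
  proof
    fix i show "\<exists>a. i < k \<longrightarrow> a \<in> A \<and> (\<forall>y. cmod (complex_of_real (c * \<beta> i y) - a y) < \<epsilon>)"
    proof (cases "i < k")
      case True
      obtain K where K: "compact K" "\<forall>z. z \<notin> K \<longrightarrow> \<beta> i z = 0" using bK[OF True] by blast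
      have "(\<lambda>y. complex_of_real (c * \<beta> i y)) \<in> C0"
        using K by (intro C0_cs[where K=K] continuous_intros bc[OF True]) auto
      then obtain a where "a \<in> A" "\<forall>y. cmod (complex_of_real (c * \<beta> i y) - a y) < \<epsilon>"
        using A_dense eps by blast
      then show ?thesis by blast
    qed simp
  qed
  then obtain af where "\<forall>i. i < k \<longrightarrow> af i \<in> A \<and> (\<forall>y. cmod (complex_of_real (c * \<beta> i y) - af i y) < \<epsilon>)"
    by (rule choice[THEN exE])
  then show ?thesis by blast
qed

lemma DL:
  assumes L: "compact L"
  shows "\<exists>N\<in>M. (\<forall>x. Im (N x) = 0 \<and> 0 \<le> Re (N x)) \<and> (\<forall>x\<in>L. 1 \<le> Re (N x))"
proof -
  define P where "P = p ` L"
  have P: "compact P" unfolding P_def by (rule compact_continuous_image[OF continuous_on_subset[OF pc subset_UNIV] L])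
  have step: "\<forall>y\<in>P. \<exists>n. n \<in> M \<and> (\<forall>x. Im (n x) = 0 \<and> 0 \<le> Re (n x)) \<and>
      (\<exists>V. open V \<and> y \<in> V \<and> (\<forall>x. p x \<in> V \<longrightarrow> 1/2 < Re (n x)))"
  proof
    fix y assume "y \<in> P"
    have "continuous_on (p -` {y}) (\<lambda>x. 1::complex)" by (rule continuous_on_const)
    then obtain m where m: "m \<in> M" "\<forall>x\<in>p -` {y}. cmod (1 - m x) < 1/2"
      using M_fiber_dense[of y "\<lambda>x. 1" "1/2"] by auto
    obtain n where n: "n \<in> M" "\<forall>x. Im (n x) = 0 \<and> cmod (m x) \<le> Re (n x)"
      using M_dom'[OF m(1)] by blast
    have nc: "continuous_on UNIV (\<lambda>x. Re (n x))" using M_cont[OF n(1)] by (intro continuous_intros)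
    have oO: "open {x. 1/2 < Re (n x)}" by (rule open_Collect_less[OF continuous_on_const nc])
    have fib: "p -` {y} \<subseteq> {x. 1/2 < Re (n x)}"
    proof
      fix x assume x: "x \<in> p -` {y}"
      have "cmod (1::complex) \<le> cmod (1 - m x) + cmod (m x)"
        using norm_triangle_ineq[of "1 - m x" "m x"] by simp
      moreover have "cmod (1 - m x) < 1/2" using m(2) x by blast
      ultimately have "1/2 < cmod (m x)" by simp
      moreover have "cmod (m x) \<le> Re (n x)" using n(2) by blast
      ultimately show "x \<in> {x. 1/2 < Re (n x)}" by simp
    qed
    obtain V where V: "open V" "y \<in> V" "p -` V \<subseteq> {x. 1/2 < Re (n x)}"
      using proper_tube[OF lcY p oO fib] by blast
    have "\<forall>x. Im (n x) = 0 \<and> 0 \<le> Re (n x)"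
      using n(2) norm_ge_zero order_trans by blast
    moreover have "\<forall>x. p x \<in> V \<longrightarrow> 1/2 < Re (n x)" using V(3) by blast
    ultimately show "\<exists>n. n \<in> M \<and> (\<forall>x. Im (n x) = 0 \<and> 0 \<le> Re (n x)) \<and>
      (\<exists>V. open V \<and> y \<in> V \<and> (\<forall>x. p x \<in> V \<longrightarrow> 1/2 < Re (n x)))"
      using n(1) V(1,2) by blast
  qed
  define Q where "Q y n \<longleftrightarrow> n \<in> M \<and> (\<forall>x. Im (n x) = 0 \<and> 0 \<le> Re (n x)) \<and>
      (\<exists>V. open V \<and> y \<in> V \<and> (\<forall>x. p x \<in> V \<longrightarrow> 1/2 < Re (n x)))" for y n
  define nf where "nf y = (SOME n. Q y n)" for y
  have nfQ: "Q y (nf y)" if "y \<in> P" for y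
  proof -
    have "\<exists>n. Q y n" using step that unfolding Q_def by (rule bspec)
    then obtain n where "Q y n" by (rule exE)
    then show ?thesis unfolding nf_def by (rule someI[of "Q y"])
  qed
  define R where "R y V \<longleftrightarrow> open V \<and> y \<in> V \<and> (\<forall>x. p x \<in> V \<longrightarrow> 1/2 < Re (nf y x))" for y V
  define Vf where "Vf y = (SOME V. R y V)" for y
  have VfR: "R y (Vf y)" if "y \<in> P" for y
  proof -
    have "\<exists>V. R y V" using nfQ[OF that] unfolding Q_def R_def by blast
    then obtain V where "R y V" by (rule exE)
    then show ?thesis unfolding Vf_def by (rule someI[of "R y"])
  qed
  have nfM: "\<And>y. y \<in> P \<Longrightarrow> nf y \<in> M" using nfQ unfolding Q_def by blast
  have nfIm: "\<And>y x. y \<in> P \<Longrightarrow> Im (nf y x) = 0" using nfQ unfolding Q_def by blast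
  have nfpos: "\<And>y x. y \<in> P \<Longrightarrow> 0 \<le> Re (nf y x)" using nfQ unfolding Q_def by blast
  have nfV: "\<And>y x. y \<in> P \<Longrightarrow> p x \<in> Vf y \<Longrightarrow> 1/2 < Re (nf y x)" using VfR unfolding R_def by blast
  have Vo: "\<And>y. y \<in> P \<Longrightarrow> open (Vf y) \<and> y \<in> Vf y" using VfR unfolding R_def by blast
  obtain k :: nat and c :: "nat \<Rightarrow> 'y" and \<beta> :: "nat \<Rightarrow> 'y \<Rightarrow> real" where part: "(\<forall>i<k. c i \<in> P)" "(\<forall>i<k. continuous_on UNIV (\<beta> i))"
    "(\<forall>i<k. \<forall>z. 0 \<le> \<beta> i z)" "(\<forall>i<k. \<forall>z. \<beta> i z \<noteq> 0 \<longrightarrow> z \<in> Vf (c i))"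
    "(\<forall>i<k. \<exists>K. compact K \<and> (\<forall>z. z \<notin> K \<longrightarrow> \<beta> i z = 0))"
    "(\<forall>z. (\<Sum>i<k. \<beta> i z) \<le> 1)" "(\<forall>z\<in>P. (\<Sum>i<k. \<beta> i z) = 1)"
    using partition_lc[where V=Vf, OF lcY P Vo] by blast
  define nn where "nn i = nf (c i)" for i
  have nnM: "\<And>i. i < k \<Longrightarrow> nn i \<in> M" unfolding nn_def using nfM part(1) by blast
  have nnIm: "\<And>i x. i < k \<Longrightarrow> Im (nn i x) = 0" unfolding nn_def using nfIm part(1) by blast
  have nnpos: "\<And>i x. i < k \<Longrightarrow> 0 \<le> Re (nn i x)" unfolding nn_def using nfpos part(1) by blast
  have nnV: "\<And>i x. i < k \<Longrightarrow> \<beta> i (p x) \<noteq> 0 \<Longrightarrow> 1/2 < Re (nn i x)"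
    unfolding nn_def using nfV part(1,4) by blast
  define S where "S x = (\<Sum>i<k. Re (nn i x))" for x
  have Sc: "continuous_on UNIV S" unfolding S_def
    by (intro continuous_intros continuous_on_Re M_cont nnM) auto
  have "compact (S ` L)" by (rule compact_continuous_image[OF continuous_on_subset[OF Sc subset_UNIV] L])
  then have "bounded (S ` L)" by (rule compact_imp_bounded)
  then obtain a :: real where a: "\<forall>z\<in>S ` L. norm z \<le> a" unfolding bounded_iff by (rule exE)
  define B where "B = max a 0"
  have B: "\<And>x. x \<in> L \<Longrightarrow> S x \<le> B" "B \<ge> 0" using a unfolding B_def by force+
  define \<epsilon> where "\<epsilon> = 1 / (2 * (B + 1))"
  have eps: "\<epsilon> > 0" using B(2) unfolding \<epsilon>_def by simp
  have epsB: "\<epsilon> * B \<le> 1/2" using B(2) unfolding \<epsilon>_def by (simp add: field_simps)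
  obtain af :: "nat \<Rightarrow> 'y \<Rightarrow> complex" where af: "\<forall>i<k. af i \<in> A \<and> (\<forall>y. cmod (complex_of_real (3 * \<beta> i y) - af i y) < \<epsilon>)"
    using approx_A[of k \<beta> \<epsilon> 3] part(2,5) eps by blast
  define N0 where "N0 x = (\<Sum>i<k. complex_of_real (Re (af i (p x) * nn i x)))" for x
  have N0M: "N0 \<in> M" unfolding N0_def
    by (intro M_sum M_re M_module) (use af nnM in auto)
  have N0L: "1 \<le> Re (N0 x)" if x: "x \<in> L" for x
  proof -
    have trm: "3/2 * \<beta> i (p x) - \<epsilon> * Re (nn i x) \<le> Re (af i (p x) * nn i x)" if i: "i < k" for i
    proof -
      have "Re (complex_of_real (3 * \<beta> i (p x)) - af i (p x)) < \<epsilon>"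
        using af i complex_Re_le_cmod le_less_trans by blast
      then have ra: "3 * \<beta> i (p x) - \<epsilon> \<le> Re (af i (p x))" by simp
      have re: "Re (af i (p x) * nn i x) = Re (af i (p x)) * Re (nn i x)" using nnIm[OF i] by simp
      have "(3 * \<beta> i (p x) - \<epsilon>) * Re (nn i x) \<le> Re (af i (p x)) * Re (nn i x)"
        using ra nnpos[OF i] by (rule mult_right_mono)
      moreover have "3/2 * \<beta> i (p x) \<le> 3 * \<beta> i (p x) * Re (nn i x)"
      proof (cases "\<beta> i (p x) = 0")
        case True then show ?thesis by simp
      next
        case False
        then have "1/2 < Re (nn i x)" by (rule nnV[OF i])
        moreover have "0 \<le> \<beta> i (p x)" using part(3) i by blast
        ultimately have "\<beta> i (p x) * (3/2) \<le> \<beta> i (p x) * (3 * Re (nn i x))"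
          by (intro mult_left_mono) auto
        then show ?thesis by (simp add: algebra_simps)
      qed
      moreover have "(3 * \<beta> i (p x) - \<epsilon>) * Re (nn i x) = 3 * \<beta> i (p x) * Re (nn i x) - \<epsilon> * Re (nn i x)"
        by (simp add: algebra_simps)
      ultimately show ?thesis using re by linarith
    qed
    have "(\<Sum>i<k. 3/2 * \<beta> i (p x) - \<epsilon> * Re (nn i x)) \<le> (\<Sum>i<k. Re (af i (p x) * nn i x))"
      using trm by (intro sum_mono) auto
    moreover have "(\<Sum>i<k. 3/2 * \<beta> i (p x) - \<epsilon> * Re (nn i x)) = 3/2 * (\<Sum>i<k. \<beta> i (p x)) - \<epsilon> * S x"
      unfolding S_def by (simp add: sum_subtractf sum_distrib_left)
    moreover have "(\<Sum>i<k. \<beta> i (p x)) = 1" using part(7) x unfolding P_def by blast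
    moreover have "\<epsilon> * S x \<le> \<epsilon> * B" using B(1)[OF x] eps by (intro mult_left_mono) auto
    moreover have "Re (N0 x) = (\<Sum>i<k. Re (af i (p x) * nn i x))" unfolding N0_def by (simp add: Re_sum)
    ultimately show ?thesis using epsB by linarith
  qed
  obtain N where N: "N \<in> M" "\<forall>x. Im (N x) = 0 \<and> cmod (N0 x) \<le> Re (N x)" using M_dom'[OF N0M] by blast
  have "\<forall>x. Im (N x) = 0 \<and> 0 \<le> Re (N x)" using N(2) norm_ge_zero order_trans by blast
  moreover have "\<forall>x\<in>L. 1 \<le> Re (N x)"
  proof
    fix x assume "x \<in> L"
    then show "1 \<le> Re (N x)" using N0L[of x] complex_Re_le_cmod[of "N0 x"] N(2) by (meson order_trans)
  qed
  ultimately show ?thesis using N(1) by blast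
qed

end

context setting begin

lemma MLem:
  fixes \<psi> :: "'x \<Rightarrow> complex"
  assumes \<psi>c: "continuous_on UNIV \<psi>" and K: "compact K" and z: "\<And>x. x \<notin> K \<Longrightarrow> \<psi> x = 0"
  shows "\<psi> \<in> T"
proof (rule TI)
  show "integrable CM \<psi>" by (rule int_cs[OF \<psi>c K z])
  fix e :: real assume e: "e > 0"
  define P where "P = p ` K"
  have P: "compact P" unfolding P_def by (rule compact_continuous_image[OF continuous_on_subset[OF pc subset_UNIV] K])
  obtain W Cw :: "'y set" where WC: "open W" "compact Cw" "P \<subseteq> W" "W \<subseteq> Cw"
    using rel_compact_nbhd[OF lcY P] by blast
  define L where "L = p -` Cw"
  have L: "compact L" unfolding L_def by (rule pk[OF WC(2)])
  obtain N :: "'x \<Rightarrow> complex" where N: "N \<in> M" "\<forall>x. Im (N x) = 0 \<and> 0 \<le> Re (N x)" "\<forall>x\<in>L. 1 \<le> Re (N x)"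
    using DL[OF L] by blast
  have NIm: "\<And>x. Im (N x) = 0" and Npos: "\<And>x. 0 \<le> Re (N x)" and NL: "\<And>x. x \<in> L \<Longrightarrow> 1 \<le> Re (N x)"
    using N by blast+
  define IN where "IN = Re (integral\<^sup>L CM N)"
  have IN0: "0 \<le> IN"
  proof -
    have "IN = integral\<^sup>L CM (\<lambda>x. Re (N x))" unfolding IN_def using M_int[OF N(1)] by simp
    also have "\<dots> \<ge> 0" by (rule Bochner_Integration.integral_nonneg) (rule Npos)
    finally show ?thesis .
  qed
  define \<eta> where "\<eta> = e / (2 * (IN + 1))"
  have eta: "\<eta> > 0" unfolding \<eta>_def using e IN0 by simp
  have etaIN: "\<eta> * IN < e / 2"
  proof -
    have "\<eta> * IN = (e/2) * (IN / (IN + 1))" unfolding \<eta>_def by (simp add: field_simps)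
    also have "\<dots> < (e/2) * 1" using e IN0 by (intro mult_strict_left_mono) (auto simp: divide_less_eq)
    finally show ?thesis by simp
  qed
  define Q where "Q y m n V \<longleftrightarrow> m \<in> M \<and> n \<in> M \<and> (\<forall>x. Im (n x) = 0 \<and> cmod (m x) \<le> Re (n x)) \<and>
     open V \<and> y \<in> V \<and> V \<subseteq> W \<and> (\<forall>x. p x \<in> V \<longrightarrow> cmod (\<psi> x - m x) < \<eta>)"
    for y and m n :: "'x \<Rightarrow> complex" and V
  have exQ: "\<exists>t. Q y (fst t) (fst (snd t)) (snd (snd t))" if y: "y \<in> P" for y
  proof -
    have "continuous_on (p -` {y}) \<psi>" by (rule continuous_on_subset[OF \<psi>c subset_UNIV])
    then obtain m :: "'x \<Rightarrow> complex" where m: "m \<in> M" "\<forall>x\<in>p -` {y}. cmod (\<psi> x - m x) < \<eta>"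
      using M_fiber_dense[OF _ eta] by blast
    have oO: "open {x. cmod (\<psi> x - m x) < \<eta>}"
      by (intro open_Collect_less continuous_intros \<psi>c M_cont[OF m(1)])
    have fib: "p -` {y} \<subseteq> {x. cmod (\<psi> x - m x) < \<eta>}" using m(2) by blast
    obtain V' :: "'y set" where V': "open V'" "y \<in> V'" "p -` V' \<subseteq> {x. cmod (\<psi> x - m x) < \<eta>}"
      using proper_tube[OF lcY p oO fib] by blast
    obtain n :: "'x \<Rightarrow> complex" where n: "n \<in> M" "\<forall>x. Im (n x) = 0 \<and> cmod (m x) \<le> Re (n x)"
      using M_dom'[OF m(1)] by blast
    have "Q y m n (V' \<inter> W)"
      unfolding Q_def using m(1) n V' WC(1,3) y by blast
    then show ?thesis by (intro exI[of _ "(m, n, V' \<inter> W)"]) simp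
  qed
  define tf where "tf y = (SOME t. Q y (fst t) (fst (snd t)) (snd (snd t)))" for y
  define mf where "mf y = fst (tf y)" for y
  define nf where "nf y = fst (snd (tf y))" for y
  define Vf where "Vf y = snd (snd (tf y))" for y
  have Qf: "Q y (mf y) (nf y) (Vf y)" if yP: "y \<in> P" for y
  proof -
    obtain t where "Q y (fst t) (fst (snd t)) (snd (snd t))" using exQ[OF yP] by (rule exE)
    then have "Q y (fst (tf y)) (fst (snd (tf y))) (snd (snd (tf y)))"
      unfolding tf_def by (rule someI[of "\<lambda>t. Q y (fst t) (fst (snd t)) (snd (snd t))"])
    then show ?thesis unfolding mf_def nf_def Vf_def .
  qed
  have Vo: "\<And>y. y \<in> P \<Longrightarrow> open (Vf y) \<and> y \<in> Vf y" using Qf unfolding Q_def by blast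
  obtain k :: nat and c :: "nat \<Rightarrow> 'y" and \<beta> :: "nat \<Rightarrow> 'y \<Rightarrow> real" where part: "(\<forall>i<k. c i \<in> P)" "(\<forall>i<k. continuous_on UNIV (\<beta> i))"
    "(\<forall>i<k. \<forall>z. 0 \<le> \<beta> i z)" "(\<forall>i<k. \<forall>z. \<beta> i z \<noteq> 0 \<longrightarrow> z \<in> Vf (c i))"
    "(\<forall>i<k. \<exists>K. compact K \<and> (\<forall>z. z \<notin> K \<longrightarrow> \<beta> i z = 0))"
    "(\<forall>z. (\<Sum>i<k. \<beta> i z) \<le> 1)" "(\<forall>z\<in>P. (\<Sum>i<k. \<beta> i z) = 1)"
    using partition_lc[where V=Vf, OF lcY P Vo] by blast
  define mm where "mm i = mf (c i)" for i
  define nn where "nn i = nf (c i)" for i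
  have Qi: "\<And>i. i < k \<Longrightarrow> Q (c i) (mm i) (nn i) (Vf (c i))" unfolding mm_def nn_def using Qf part(1) by blast
  have mmM: "\<And>i. i < k \<Longrightarrow> mm i \<in> M" using Qi unfolding Q_def by blast
  have nnM: "\<And>i. i < k \<Longrightarrow> nn i \<in> M" using Qi unfolding Q_def by blast
  have nnIm: "\<And>i x. i < k \<Longrightarrow> Im (nn i x) = 0" using Qi unfolding Q_def by blast
  have mmnn: "\<And>i x. i < k \<Longrightarrow> cmod (mm i x) \<le> Re (nn i x)" using Qi unfolding Q_def by blast
  have bpos: "\<And>i z. i < k \<Longrightarrow> 0 \<le> \<beta> i z" using part(3) by blast
  have mmV: "\<And>i x. i < k \<Longrightarrow> \<beta> i (p x) \<noteq> 0 \<Longrightarrow> cmod (\<psi> x - mm i x) < \<eta> \<and> x \<in> L"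
  proof -
    fix i x assume i: "i < k" and b: "\<beta> i (p x) \<noteq> 0"
    have pV: "p x \<in> Vf (c i)" using part(4) i b by blast
    have "Vf (c i) \<subseteq> W" "\<forall>x. p x \<in> Vf (c i) \<longrightarrow> cmod (\<psi> x - mm i x) < \<eta>"
      using Qi[OF i] unfolding Q_def by blast+
    then show "cmod (\<psi> x - mm i x) < \<eta> \<and> x \<in> L" using pV WC(4) unfolding L_def by blast
  qed
  define Sn where "Sn = (\<Sum>i<k. Re (integral\<^sup>L CM (nn i)))"
  define \<epsilon> where "\<epsilon> = e / (2 * (\<bar>Sn\<bar> + 1))"
  have eps: "\<epsilon> > 0" unfolding \<epsilon>_def using e by (simp add: add_nonneg_pos)
  have epsS: "\<epsilon> * Sn < e / 2"
  proof -
    have "\<epsilon> * Sn \<le> \<epsilon> * \<bar>Sn\<bar>" using eps by (intro mult_left_mono) auto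
    also have "\<epsilon> * \<bar>Sn\<bar> = (e/2) * (\<bar>Sn\<bar> / (\<bar>Sn\<bar> + 1))" unfolding \<epsilon>_def by (simp add: field_simps)
    also have "\<dots> < (e/2) * 1" using e by (intro mult_strict_left_mono) (auto simp: divide_less_eq)
    finally show ?thesis by simp
  qed
  obtain af :: "nat \<Rightarrow> 'y \<Rightarrow> complex" where af: "\<forall>i<k. af i \<in> A \<and> (\<forall>y. cmod (complex_of_real (1 * \<beta> i y) - af i y) < \<epsilon>)"
    using approx_A[of k \<beta> \<epsilon> 1] part(2,5) eps by blast
  have afA: "\<And>i. i < k \<Longrightarrow> af i \<in> A" using af by blast
  have afb: "\<And>i y. i < k \<Longrightarrow> cmod (complex_of_real (\<beta> i y) - af i y) < \<epsilon>" using af by simp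
  define m1 where "m1 x = (\<Sum>i<k. af i (p x) * mm i x)" for x
  define m2 where "m2 x = complex_of_real \<eta> * N x + complex_of_real \<epsilon> * (\<Sum>i<k. nn i x)" for x
  have m1M: "m1 \<in> M" unfolding m1_def by (intro M_sum M_module afA mmM)
  have m2M: "m2 \<in> M" unfolding m2_def by (intro M_add M_smult M_sum N(1) nnM)
  have pt: "\<forall>x. Im (m2 x) = 0 \<and> cmod (\<psi> x - m1 x) \<le> Re (m2 x)"
  proof
    fix x
    define b where "b i = \<beta> i (p x)" for i
    have sumb: "complex_of_real (\<Sum>i<k. b i) * \<psi> x = \<psi> x"
    proof (cases "x \<in> K")
      case True
      then have "p x \<in> P" unfolding P_def by blast
      then have "(\<Sum>i<k. b i) = 1" unfolding b_def using part(7) by blast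
      then show ?thesis by simp
    next
      case False then show ?thesis using z by simp
    qed
    have eq: "\<psi> x - m1 x = (\<Sum>i<k. complex_of_real (b i) * (\<psi> x - mm i x) + (complex_of_real (b i) - af i (p x)) * mm i x)"
    proof -
      have "(\<Sum>i<k. complex_of_real (b i) * (\<psi> x - mm i x) + (complex_of_real (b i) - af i (p x)) * mm i x)
          = (\<Sum>i<k. complex_of_real (b i) * \<psi> x - af i (p x) * mm i x)"
        by (rule sum.cong) (simp_all add: algebra_simps)
      also have "\<dots> = complex_of_real (\<Sum>i<k. b i) * \<psi> x - m1 x"
        unfolding m1_def by (simp add: sum_subtractf sum_distrib_right)
      also have "\<dots> = \<psi> x - m1 x" using sumb by simp
      finally show ?thesis by simp
    qed
    have bnd: "cmod (complex_of_real (b i) * (\<psi> x - mm i x) + (complex_of_real (b i) - af i (p x)) * mm i x)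
        \<le> b i * (\<eta> * Re (N x)) + \<epsilon> * Re (nn i x)" if i: "i < k" for i
    proof -
      have b0: "0 \<le> b i" unfolding b_def using bpos[OF i] .
      have t1: "cmod (complex_of_real (b i) * (\<psi> x - mm i x)) \<le> b i * (\<eta> * Re (N x))"
      proof (cases "b i = 0")
        case True then show ?thesis by simp
      next
        case False
        then have "cmod (\<psi> x - mm i x) < \<eta>" "x \<in> L" using mmV[OF i] unfolding b_def by blast+
        moreover have "\<eta> * 1 \<le> \<eta> * Re (N x)"
          using NL[OF \<open>x \<in> L\<close>] eta by (intro mult_left_mono) auto
        ultimately have "cmod (\<psi> x - mm i x) \<le> \<eta> * Re (N x)" by linarith
        then have "b i * cmod (\<psi> x - mm i x) \<le> b i * (\<eta> * Re (N x))" using b0 by (rule mult_left_mono)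
        then show ?thesis using b0 by (simp add: norm_mult)
      qed
      have t2: "cmod ((complex_of_real (b i) - af i (p x)) * mm i x) \<le> \<epsilon> * Re (nn i x)"
      proof -
        have "cmod ((complex_of_real (b i) - af i (p x)) * mm i x) = cmod (complex_of_real (b i) - af i (p x)) * cmod (mm i x)"
          by (rule norm_mult)
        also have "\<dots> \<le> \<epsilon> * Re (nn i x)"
          using afb[OF i, of "p x"] mmnn[OF i, of x] eps unfolding b_def
          by (intro mult_mono) auto
        finally show ?thesis .
      qed
      show ?thesis using norm_triangle_ineq[of "complex_of_real (b i) * (\<psi> x - mm i x)" "(complex_of_real (b i) - af i (p x)) * mm i x"] t1 t2
        by linarith
    qed
    have "cmod (\<psi> x - m1 x) \<le> (\<Sum>i<k. cmod (complex_of_real (b i) * (\<psi> x - mm i x) + (complex_of_real (b i) - af i (p x)) * mm i x))"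
      unfolding eq by (rule norm_sum)
    also have "\<dots> \<le> (\<Sum>i<k. b i * (\<eta> * Re (N x)) + \<epsilon> * Re (nn i x))"
      using bnd by (intro sum_mono) auto
    also have "\<dots> = (\<Sum>i<k. b i) * (\<eta> * Re (N x)) + \<epsilon> * (\<Sum>i<k. Re (nn i x))"
      by (simp add: sum.distrib sum_distrib_left sum_distrib_right)
    also have "\<dots> \<le> 1 * (\<eta> * Re (N x)) + \<epsilon> * (\<Sum>i<k. Re (nn i x))"
    proof -
      have "(\<Sum>i<k. b i) \<le> 1" unfolding b_def using part(6) by blast
      moreover have "0 \<le> \<eta> * Re (N x)" using eta Npos[of x] by simp
      ultimately have "(\<Sum>i<k. b i) * (\<eta> * Re (N x)) \<le> 1 * (\<eta> * Re (N x))" by (rule mult_right_mono)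
      then show ?thesis by linarith
    qed
    also have "\<dots> = Re (m2 x)" unfolding m2_def by (simp add: Re_sum)
    finally have "cmod (\<psi> x - m1 x) \<le> Re (m2 x)" .
    moreover have "Im (m2 x) = 0" unfolding m2_def using NIm nnIm by (simp add: Im_sum)
    ultimately show "Im (m2 x) = 0 \<and> cmod (\<psi> x - m1 x) \<le> Re (m2 x)" by blast
  qed
  have "Re (integral\<^sup>L CM m2) = \<eta> * IN + \<epsilon> * Sn"
  proof -
    have iN: "integrable CM N" by (rule M_int[OF N(1)])
    have inn: "\<And>i. i \<in> {..<k} \<Longrightarrow> integrable CM (nn i)" using M_int nnM by blast
    have isum: "integrable CM (\<lambda>x. \<Sum>i<k. nn i x)" using inn by (rule Bochner_Integration.integrable_sum)
    have "integral\<^sup>L CM m2 = complex_of_real \<eta> * integral\<^sup>L CM N + complex_of_real \<epsilon> * integral\<^sup>L CM (\<lambda>x. \<Sum>i<k. nn i x)"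
      unfolding m2_def using iN isum by simp
    also have "integral\<^sup>L CM (\<lambda>x. \<Sum>i<k. nn i x) = (\<Sum>i<k. integral\<^sup>L CM (nn i))"
      using inn by (rule Bochner_Integration.integral_sum)
    finally show ?thesis unfolding IN_def Sn_def by (simp add: Re_sum)
  qed
  then have "Re (integral\<^sup>L CM m2) < e" using etaIN epsS by simp
  then show "\<exists>m1\<in>M. \<exists>m2\<in>M. (\<forall>x. Im (m2 x) = 0 \<and> cmod (\<psi> x - m1 x) \<le> Re (m2 x)) \<and> Re (integral\<^sup>L CM m2) < e"
    by (rule exI2[OF m1M m2M pt])
qed

end

context setting begin

lemma beta_T:
  fixes \<beta> :: "'x \<Rightarrow> real"
  assumes "continuous_on UNIV \<beta>" "compact K" "\<And>z. z \<notin> K \<Longrightarrow> \<beta> z = 0"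
  shows "(\<lambda>x. complex_of_real (\<beta> x)) \<in> T"
  using assms by (intro MLem[where K=K] continuous_intros) auto

lemma RI_T:
  assumes phi: "\<phi> \<in> RI mu"
  shows "\<phi> \<in> T"
proof -
  define S where "S = closure {x. \<phi> x \<noteq> 0}"
  have bd: "bounded (range \<phi>)" and Sc: "compact S"
    and exN: "\<exists>N\<in>null_sets CM. {x. \<not> isCont \<phi> x} \<subseteq> N"
    using phi unfolding RI_def S_def by blast+
  obtain B0 :: real where B0: "\<forall>z\<in>range \<phi>. norm z \<le> B0" using bd unfolding bounded_iff by (rule exE)
  define B where "B = max B0 0"
  have B1: "cmod (\<phi> x) \<le> B" for x
  proof -
    have "cmod (\<phi> x) \<le> B0" using B0 by blast
    then show ?thesis unfolding B_def by linarith
  qed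
  have B2: "0 \<le> B" unfolding B_def by simp
  note B = B1 B2
  obtain N0 :: "'x set" where N0: "N0 \<in> null_sets CM" "{x. \<not> isCont \<phi> x} \<subseteq> N0" using exN by blast
  obtain N' :: "'x set" where N': "N' \<in> null_sets mu" "N0 \<subseteq> N'" using N0(1) unfolding null_sets_completion_iff2 by blast
  have contN: "\<And>x. x \<notin> N' \<Longrightarrow> isCont \<phi> x" using N0(2) N'(2) by blast
  have zS: "\<phi> x = 0" if xS: "x \<notin> S" for x
  proof -
    have "{x. \<phi> x \<noteq> 0} \<subseteq> S" unfolding S_def by (rule closure_subset)
    then show ?thesis using xS by blast
  qed
  have meas: "\<phi> \<in> borel_measurable CM"
  proof (rule borel_measurableI)
    fix S0 :: "complex set" assume S0: "open S0"
    define G where "G = \<Union>{U. open U \<and> (\<forall>z\<in>U. \<phi> z \<in> S0)}"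
    have oG: "open G" unfolding G_def by (rule open_Union) blast
    have eq: "\<phi> -` S0 = (G - N') \<union> (\<phi> -` S0 \<inter> N')"
    proof (intro equalityI subsetI)
      fix x assume x: "x \<in> \<phi> -` S0"
      show "x \<in> (G - N') \<union> (\<phi> -` S0 \<inter> N')"
      proof (cases "x \<in> N'")
        case True then show ?thesis using x by blast
      next
        case False
        then have "continuous (at x) \<phi>" by (rule contN)
        then obtain U where "open U" "x \<in> U" "\<forall>z\<in>U. \<phi> z \<in> S0"
          using x S0 unfolding continuous_at_open by blast
        then have "x \<in> G" unfolding G_def by blast
        then show ?thesis using False by blast
      qed
    next
      fix x assume "x \<in> (G - N') \<union> (\<phi> -` S0 \<inter> N')"
      then show "x \<in> \<phi> -` S0" unfolding G_def by blast
    qed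
    have "G \<in> sets mu" using open_sets[OF oG] by blast
    moreover have "N' \<in> sets mu" using N'(1) by blast
    ultimately have "G - N' \<in> sets CM" by simp
    moreover have "\<phi> -` S0 \<inter> N' \<in> sets CM" by (rule null_sets_completion[OF N'(1) Int_lower2])
    ultimately have "\<phi> -` S0 \<in> sets CM" by (subst eq) (rule sets.Un)
    then show "\<phi> -` S0 \<inter> space CM \<in> sets CM" using space_CM by simp
  qed
  have int: "integrable CM \<phi>"
  proof (rule integrableI_bounded_set[where A=S and B=B])
    show "S \<in> sets CM" using cpt_sets[OF Sc] by blast
    show "\<phi> \<in> borel_measurable CM" by (rule meas)
    show "emeasure CM S < \<infinity>" using cpt_sets[OF Sc] by simp
    show "AE x in CM. x \<in> S \<longrightarrow> cmod (\<phi> x) \<le> B" using B(1) by (intro AE_I2) blast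
    show "AE x in CM. x \<notin> S \<longrightarrow> \<phi> x = 0" using zS by (intro AE_I2) blast
  qed
  show ?thesis
  proof (rule T_squeeze[OF int])
    fix e :: real assume e: "e > 0"
    obtain G CG :: "'x set" where GC: "open G" "compact CG" "S \<subseteq> G" "G \<subseteq> CG"
      using rel_compact_nbhd[OF lcX Sc] by blast
    define \<Lambda> where "\<Lambda> = measure CM CG"
    have L0: "0 \<le> \<Lambda>" unfolding \<Lambda>_def by simp
    define \<delta> where "\<delta> = e / (\<Lambda> + B + 1)"
    have dpos: "\<delta> > 0" unfolding \<delta>_def using e L0 B(2) by simp
    have dbound: "\<delta> * \<Lambda> + B * \<delta> < e"
    proof -
      have pos: "\<Lambda> + B + 1 > 0" using L0 B(2) by simp
      have "\<delta> * \<Lambda> + B * \<delta> = \<delta> * (\<Lambda> + B)" by (simp add: algebra_simps)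
      also have "\<dots> < \<delta> * (\<Lambda> + B + 1)" using dpos by (intro mult_strict_left_mono) auto
      also have "\<delta> * (\<Lambda> + B + 1) = e" unfolding \<delta>_def using pos by simp
      finally show ?thesis .
    qed
    have "N' \<in> sets mu" using N'(1) by blast
    then have "emeasure mu N' = (INF U\<in>{U. open U \<and> N' \<subseteq> U}. emeasure mu U)" using rad3 by blast
    moreover have "emeasure mu N' = 0" using N'(1) by blast
    ultimately have "(INF U\<in>{U. open U \<and> N' \<subseteq> U}. emeasure mu U) < ennreal \<delta>" using dpos by simp
    then obtain U where U: "open U" "N' \<subseteq> U" "emeasure mu U < ennreal \<delta>"
      unfolding INF_less_iff by blast
    define U0 where "U0 = U \<inter> G"
    have oU0: "open U0" unfolding U0_def using U(1) GC(1) by blast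
    have U0m: "measure CM U0 < \<delta>"
    proof -
      have "emeasure CM U0 = emeasure mu U0" using open_sets[OF oU0] by blast
      also have "\<dots> \<le> emeasure mu U" unfolding U0_def using open_sets[OF U(1)] by (intro emeasure_mono) auto
      finally have lt: "emeasure CM U0 < ennreal \<delta>" using U(3) by simp
      then have "emeasure CM U0 \<noteq> top" by auto
      then have "emeasure CM U0 = ennreal (measure CM U0)" by (rule emeasure_eq_ennreal_measure)
      with lt show ?thesis using dpos by (simp add: ennreal_less_iff)
    qed
    define Wx where "Wx x = (SOME W. open W \<and> x \<in> W \<and> (\<forall>z\<in>W. cmod (\<phi> z - \<phi> x) < \<delta>))" for x
    have Wx: "open (Wx x) \<and> x \<in> Wx x \<and> (\<forall>z\<in>Wx x. cmod (\<phi> z - \<phi> x) < \<delta>)" if xU: "x \<notin> U" for x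
    proof -
      have "x \<notin> N'" using xU U(2) by blast
      then have "continuous (at x) \<phi>" by (rule contN)
      then obtain W where W: "open W" "x \<in> W" "\<forall>z\<in>W. \<phi> z \<in> ball (\<phi> x) \<delta>"
        using dpos unfolding continuous_at_open by (meson centre_in_ball open_ball)
      then have "open W \<and> x \<in> W \<and> (\<forall>z\<in>W. cmod (\<phi> z - \<phi> x) < \<delta>)"
        by (simp add: dist_norm norm_minus_commute)
      then show ?thesis unfolding Wx_def by (rule someI[of "\<lambda>W. open W \<and> x \<in> W \<and> (\<forall>z\<in>W. cmod (\<phi> z - \<phi> x) < \<delta>)"])
    qed
    define V where "V x = (if x \<in> U then U0 else Wx x \<inter> G)" for x
    have Vo: "\<And>x. x \<in> S \<Longrightarrow> open (V x) \<and> x \<in> V x"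
    proof -
      fix x assume "x \<in> S"
      then have "x \<in> G" using GC(3) by blast
      then show "open (V x) \<and> x \<in> V x" unfolding V_def U0_def using Wx[of x] U(1) GC(1) by auto
    qed
    obtain k :: nat and c :: "nat \<Rightarrow> 'x" and \<beta> :: "nat \<Rightarrow> 'x \<Rightarrow> real" where part: "(\<forall>i<k. c i \<in> S)" "(\<forall>i<k. continuous_on UNIV (\<beta> i))"
      "(\<forall>i<k. \<forall>z. 0 \<le> \<beta> i z)" "(\<forall>i<k. \<forall>z. \<beta> i z \<noteq> 0 \<longrightarrow> z \<in> V (c i))"
      "(\<forall>i<k. \<exists>K. compact K \<and> (\<forall>z. z \<notin> K \<longrightarrow> \<beta> i z = 0))"
      "(\<forall>z. (\<Sum>i<k. \<beta> i z) \<le> 1)" "(\<forall>z\<in>S. (\<Sum>i<k. \<beta> i z) = 1)"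
      using partition_lc[where V=V, OF lcX Sc Vo] by blast
    have bc: "\<And>i. i < k \<Longrightarrow> continuous_on UNIV (\<beta> i)" using part(2) by blast
    have bpos: "\<And>i z. i < k \<Longrightarrow> 0 \<le> \<beta> i z" using part(3) by blast
    have bV: "\<And>i z. i < k \<Longrightarrow> \<beta> i z \<noteq> 0 \<Longrightarrow> z \<in> V (c i)" using part(4) by blast
    have bK: "\<And>i. i < k \<Longrightarrow> \<exists>K. compact K \<and> (\<forall>z. z \<notin> K \<longrightarrow> \<beta> i z = 0)" using part(5) by blast
    have bT: "\<And>i. i < k \<Longrightarrow> (\<lambda>x. complex_of_real (\<beta> i x)) \<in> T"
    proof -
      fix i assume i: "i < k"
      obtain K where "compact K" "\<forall>z. z \<notin> K \<longrightarrow> \<beta> i z = 0" using bK[OF i] by blast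
      then show "(\<lambda>x. complex_of_real (\<beta> i x)) \<in> T" using bc[OF i] by (intro beta_T[where K=K]) auto
    qed
    have bint: "\<And>i. i < k \<Longrightarrow> integrable CM (\<beta> i)"
    proof -
      fix i assume i: "i < k"
      obtain K where "compact K" "\<forall>z. z \<notin> K \<longrightarrow> \<beta> i z = 0" using bK[OF i] by blast
      then show "integrable CM (\<beta> i)" using bc[OF i] by (intro int_cs[where K=K]) auto
    qed
    define \<gamma> where "\<gamma> i = (if c i \<in> U then 0 else \<phi> (c i))" for i
    define \<omega> where "\<omega> i = (if c i \<in> U then B else \<delta>)" for i
    define g where "g x = (\<Sum>i<k. \<gamma> i * complex_of_real (\<beta> i x))" for x
    define H where "H x = (\<Sum>i<k. \<omega> i * \<beta> i x)" for x
    define h where "h x = complex_of_real (H x)" for x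
    have gT: "g \<in> T" unfolding g_def by (intro T_sum T_smult bT)
    have hT: "h \<in> T"
    proof -
      have "(\<lambda>x. \<Sum>i<k. complex_of_real (\<omega> i) * complex_of_real (\<beta> i x)) \<in> T" by (intro T_sum T_smult bT)
      moreover have "(\<lambda>x. \<Sum>i<k. complex_of_real (\<omega> i) * complex_of_real (\<beta> i x)) = h"
        unfolding h_def H_def by (rule ext) simp
      ultimately show ?thesis by simp
    qed
    have pt: "\<forall>x. cmod (\<phi> x - g x) \<le> Re (h x)"
    proof
      fix x
      have sumb: "complex_of_real (\<Sum>i<k. \<beta> i x) * \<phi> x = \<phi> x"
      proof (cases "x \<in> S")
        case True
        then have "(\<Sum>i<k. \<beta> i x) = 1" using part(7) by blast
        then show ?thesis by simp
      next
        case False then show ?thesis using zS by simp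
      qed
      have eq: "\<phi> x - g x = (\<Sum>i<k. complex_of_real (\<beta> i x) * (\<phi> x - \<gamma> i))"
      proof -
        have "(\<Sum>i<k. complex_of_real (\<beta> i x) * (\<phi> x - \<gamma> i)) = complex_of_real (\<Sum>i<k. \<beta> i x) * \<phi> x - g x"
          unfolding g_def by (simp add: algebra_simps sum_subtractf sum_distrib_right sum_distrib_left)
        then show ?thesis using sumb by simp
      qed
      have bnd: "cmod (complex_of_real (\<beta> i x) * (\<phi> x - \<gamma> i)) \<le> \<omega> i * \<beta> i x" if i: "i < k" for i
      proof (cases "\<beta> i x = 0")
        case True then show ?thesis by simp
      next
        case False
        have xV: "x \<in> V (c i)" by (rule bV[OF i False])
        have "cmod (\<phi> x - \<gamma> i) \<le> \<omega> i"
        proof (cases "c i \<in> U")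
          case True then show ?thesis unfolding \<gamma>_def \<omega>_def using B(1) by simp
        next
          case False
          then have "x \<in> Wx (c i)" using xV unfolding V_def by simp
          then have "cmod (\<phi> x - \<phi> (c i)) < \<delta>" using Wx[OF False] by blast
          then show ?thesis unfolding \<gamma>_def \<omega>_def using False by simp
        qed
        then have "\<beta> i x * cmod (\<phi> x - \<gamma> i) \<le> \<beta> i x * \<omega> i" using bpos[OF i] by (rule mult_left_mono)
        then show ?thesis using bpos[OF i, of x] by (simp add: norm_mult mult.commute)
      qed
      have "cmod (\<phi> x - g x) \<le> (\<Sum>i<k. cmod (complex_of_real (\<beta> i x) * (\<phi> x - \<gamma> i)))"
        unfolding eq by (rule norm_sum)
      also have "\<dots> \<le> (\<Sum>i<k. \<omega> i * \<beta> i x)" using bnd by (intro sum_mono) auto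
      finally show "cmod (\<phi> x - g x) \<le> Re (h x)" unfolding h_def H_def by simp
    qed
    define H1 where "H1 x = (\<Sum>i<k. if c i \<in> U then 0 else \<beta> i x)" for x
    define H2 where "H2 x = (\<Sum>i<k. if c i \<in> U then \<beta> i x else 0)" for x
    have Hsplit: "H x = \<delta> * H1 x + B * H2 x" for x
    proof -
      have "H x = (\<Sum>i<k. \<delta> * (if c i \<in> U then 0 else \<beta> i x) + B * (if c i \<in> U then \<beta> i x else 0))"
        unfolding H_def \<omega>_def by (rule sum.cong) auto
      then show ?thesis by (simp add: H1_def H2_def sum.distrib sum_distrib_left)
    qed
    have H1le: "H1 x \<le> indicator CG x" for x
    proof (cases "x \<in> CG")
      case True
      have "H1 x \<le> (\<Sum>i<k. \<beta> i x)" unfolding H1_def using bpos by (intro sum_mono) auto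
      also have "\<dots> \<le> 1" using part(6) by blast
      finally show ?thesis using True by simp
    next
      case False
      have "H1 x = 0" unfolding H1_def
      proof (rule sum.neutral, intro ballI)
        fix i assume "i \<in> {..<k}"
        then have i: "i < k" by simp
        show "(if c i \<in> U then 0 else \<beta> i x) = 0"
        proof (cases "c i \<in> U")
          case False
          show ?thesis
          proof (rule ccontr)
            assume "(if c i \<in> U then 0 else \<beta> i x) \<noteq> 0"
            then have "\<beta> i x \<noteq> 0" using False by simp
            then have "x \<in> V (c i)" by (rule bV[OF i])
            then have "x \<in> G" unfolding V_def U0_def using False by simp
            then show False using \<open>x \<notin> CG\<close> GC(4) by blast
          qed
        qed simp
      qed
      then show ?thesis by simp
    qed
    have H2le: "H2 x \<le> indicator U0 x" for x
    proof (cases "x \<in> U0")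
      case True
      have "H2 x \<le> (\<Sum>i<k. \<beta> i x)" unfolding H2_def using bpos by (intro sum_mono) auto
      also have "\<dots> \<le> 1" using part(6) by blast
      finally show ?thesis using True by simp
    next
      case False
      have "H2 x = 0" unfolding H2_def
      proof (rule sum.neutral, intro ballI)
        fix i assume "i \<in> {..<k}"
        then have i: "i < k" by simp
        show "(if c i \<in> U then \<beta> i x else 0) = 0"
        proof (cases "c i \<in> U")
          case True
          show ?thesis
          proof (rule ccontr)
            assume "(if c i \<in> U then \<beta> i x else 0) \<noteq> 0"
            then have "\<beta> i x \<noteq> 0" using True by simp
            then have "x \<in> V (c i)" by (rule bV[OF i])
            then have "x \<in> U0" unfolding V_def using True by simp
            then show False using \<open>x \<notin> U0\<close> by blast
          qed
        qed simp
      qed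
      then show ?thesis by simp
    qed
    have Hint: "integrable CM H" unfolding H_def using bint by (intro Bochner_Integration.integrable_sum) auto
    have iCG: "integrable CM (indicator CG :: 'x \<Rightarrow> real)"
      using cpt_sets[OF GC(2)] by (intro integrable_real_indicator) auto
    have iU0: "integrable CM (indicator U0 :: 'x \<Rightarrow> real)"
    proof (rule integrable_real_indicator)
      show "U0 \<in> sets CM" using open_sets[OF oU0] by blast
      have "emeasure CM U0 = emeasure mu U0" using open_sets[OF oU0] by blast
      also have "\<dots> \<le> emeasure mu U" unfolding U0_def using open_sets[OF U(1)] by (intro emeasure_mono) auto
      also have "\<dots> < \<infinity>" using order.strict_trans[OF U(3) ennreal_less_top[of \<delta>]] by simp
      finally show "emeasure CM U0 < \<infinity>" .
    qed
    have "integral\<^sup>L CM H \<le> integral\<^sup>L CM (\<lambda>x. \<delta> * indicator CG x + B * indicator U0 x)"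
    proof (rule integral_mono[OF Hint])
      show "integrable CM (\<lambda>x. \<delta> * indicator CG x + B * indicator U0 x)" using iCG iU0 by simp
      fix x
      have "\<delta> * H1 x \<le> \<delta> * indicator CG x" using H1le[of x] dpos by (intro mult_left_mono) auto
      moreover have "B * H2 x \<le> B * indicator U0 x" using H2le[of x] B(2) by (intro mult_left_mono) auto
      ultimately show "H x \<le> \<delta> * indicator CG x + B * indicator U0 x" using Hsplit[of x] by linarith
    qed
    also have "\<dots> = \<delta> * \<Lambda> + B * measure CM U0"
      unfolding \<Lambda>_def using iCG iU0 space_CM by simp
    also have "\<dots> \<le> \<delta> * \<Lambda> + B * \<delta>" using U0m B(2) by (simp add: mult_left_mono)
    finally have "integral\<^sup>L CM H < e" using dbound by simp
    then have "Re (integral\<^sup>L CM h) < e" unfolding h_def by simp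
    then show "\<exists>t1\<in>T. \<exists>t2\<in>T. (\<forall>x. cmod (\<phi> x - t1 x) \<le> Re (t2 x)) \<and> Re (integral\<^sup>L CM t2) < e"
      using gT hT pt by blast
  qed
qed

end

theorem mainTheorem8:
  fixes p :: "'x::t2_space \<Rightarrow> 'y::t2_space"
    and mu :: "'x measure"
    and A :: "('y \<Rightarrow> complex) set"
    and M :: "('x \<Rightarrow> complex) set"
  assumes lcX: "locally_compact_space (euclidean :: 'x topology)"
    and lcY: "locally_compact_space (euclidean :: 'y topology)"
    and p: "proper_map_cont p"
    and mu: "radon_measure mu"
    and A_sub: "A \<subseteq> C0"
    and A_zero: "(\<lambda>y. 0) \<in> A"
    and A_add: "\<And>a b. a \<in> A \<Longrightarrow> b \<in> A \<Longrightarrow> (\<lambda>y. a y + b y) \<in> A"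
    and A_smult: "\<And>c a. a \<in> A \<Longrightarrow> (\<lambda>y. c * a y) \<in> A"
    and A_mult: "\<And>a b. a \<in> A \<Longrightarrow> b \<in> A \<Longrightarrow> (\<lambda>y. a y * b y) \<in> A"
    and A_dense: "\<And>f e. f \<in> C0 \<Longrightarrow> e > 0 \<Longrightarrow> \<exists>a\<in>A. \<forall>y. cmod (f y - a y) < e"
    and M_sub: "M \<subseteq> C0 \<inter> L1 mu"
    and M_zero: "(\<lambda>x. 0) \<in> M"
    and M_add: "\<And>m n. m \<in> M \<Longrightarrow> n \<in> M \<Longrightarrow> (\<lambda>x. m x + n x) \<in> M"
    and M_smult: "\<And>c m. m \<in> M \<Longrightarrow> (\<lambda>x. c * m x) \<in> M"
    and M_module: "\<And>a m. a \<in> A \<Longrightarrow> m \<in> M \<Longrightarrow> (\<lambda>x. a (p x) * m x) \<in> M"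
    and M_cnj: "\<And>m. m \<in> M \<Longrightarrow> (\<lambda>x. cnj (m x)) \<in> M"
    and M_fiber_dense: "\<And>y g e. continuous_on (p -` {y}) g \<Longrightarrow> e > 0 \<Longrightarrow>
                          \<exists>m\<in>M. \<forall>x\<in>p -` {y}. cmod (g x - m x) < e"
    and M_dom: "\<And>m. m \<in> M \<Longrightarrow> \<exists>n\<in>M. \<forall>x. n x \<in> \<real> \<and> cmod (m x) \<le> Re (n x)"
  shows "RI mu \<subseteq> tau_closure mu M"
proof -
  have S: "setting p mu A M"
    using assms by (rule setting.intro)
  show ?thesis using setting.RI_T[OF S] by blast
qed

end
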